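(* Let $D\subset\mathbb N^n$ be finite and not contained in any coordinate hyperplane, $p$ a prime and $r\ge1$. Let $(u_{\mathbf d})_{\mathbf d\in D}$ be nonnegative integers such that $\sum_{\mathbf d}u_{\mathbf d}\mathbf d\equiv0\pmod{p^r-1}$ and $\sum_{\mathbf d}u_{\mathbf d}\mathbf d$ has all coordinates positive. Then $\sum_{\mathbf d}s_p(u_{\mathbf d})\ge s_{D,p}(r)$.
   Context: $s_p(u)$ is the sum of the base-$p$ digits of $u$. $E_{D,p}(r)$ is the set of $U=(u_{\mathbf d})\in\{0,\dots,p^r-1\}^D$ with $\sum u_{\mathbf d}\mathbf d\equiv0\pmod{p^r-1}$ (coordinatewise) and all coordinates of $\sum u_{\mathbf d}\mathbf d$ positive, and $s_{D,p}(r)=\min_{U\in E_{D,p}(r)}\sum_{\mathbf d}s_p(u_{\mathbf d})$. *)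

theory Defs
  imports "HOL-Analysis.Finite_Cartesian_Product" "HOL-Computational_Algebra.Primes"
begin

text \<open>Sum of the base-p digits of u (for p \<ge> 2); digit k is (u div p^k) mod p,
  and digits with index k > u vanish since p^k > u.\<close>
definition digit_sum :: "nat \<Rightarrow> nat \<Rightarrow> nat" where
  "digit_sum p u = (\<Sum>k<Suc u. (u div p ^ k) mod p)"

definition E_set :: "(nat ^ 'n) set \<Rightarrow> nat \<Rightarrow> nat \<Rightarrow> ((nat ^ 'n) \<Rightarrow> nat) set" where
  "E_set D p r = {U. (\<forall>d. d \<notin> D \<longrightarrow> U d = 0)
      \<and> (\<forall>d\<in>D. U d \<le> p ^ r - 1)
      \<and> (\<forall>i. (p ^ r - 1) dvd (\<Sum>d\<in>D. U d * d $ i))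
      \<and> (\<forall>i. 0 < (\<Sum>d\<in>D. U d * d $ i))}"

definition s_D :: "(nat ^ 'n) set \<Rightarrow> nat \<Rightarrow> nat \<Rightarrow> nat" where
  "s_D D p r = Min ((\<lambda>U. \<Sum>d\<in>D. digit_sum p (U d)) ` E_set D p r)"

end

theory Submission
  imports Defs
begin

lemma ds_ext:
  assumes p: "p \<ge> 2" and M: "M \<ge> Suc u"
  shows "(\<Sum>k<M. (u div p ^ k) mod p) = digit_sum p u"
proof -
  have "(\<Sum>k<M. (u div p ^ k) mod p) = (\<Sum>k<Suc u. (u div p ^ k) mod p) + (\<Sum>k\<in>{Suc u..<M}. (u div p ^ k) mod p)"
    using M by (metis lessThan_atLeast0 sum.atLeastLessThan_concat zero_le)
  moreover have "(\<Sum>k\<in>{Suc u..<M}. (u div p ^ k) mod p) = 0"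
  proof (rule sum.neutral, clarify)
    fix k assume "k \<in> {Suc u..<M}"
    hence "k > u" by auto
    have "u < 2 ^ k" using \<open>k > u\<close> less_exp[of k] by linarith
    also have "2 ^ k \<le> p ^ k" using p by (simp add: power_mono)
    finally show "(u div p ^ k) mod p = 0" by simp
  qed
  ultimately show ?thesis by (simp add: digit_sum_def)
qed

lemma ds_rec:
  assumes p: "p \<ge> 2"
  shows "digit_sum p u = u mod p + digit_sum p (u div p)"
proof -
  have "digit_sum p u = (\<Sum>k<Suc (Suc u). (u div p ^ k) mod p)"
    by (rule ds_ext[symmetric]) (use p in auto)
  also have "\<dots> = u mod p + (\<Sum>k<Suc u. (u div p ^ Suc k) mod p)"
    by (subst sum.lessThan_Suc_shift) simp
  also have "(\<Sum>k<Suc u. (u div p ^ Suc k) mod p) = (\<Sum>k<Suc u. ((u div p) div p ^ k) mod p)"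
    by (simp add: div_mult2_eq)
  also have "\<dots> = digit_sum p (u div p)"
    using p by (intro ds_ext) (auto simp: div_le_dividend)
  finally show ?thesis .
qed

lemma ds_0: "digit_sum p 0 = 0"
  by (simp add: digit_sum_def)

lemma ds_1: assumes "p \<ge> 2" shows "digit_sum p 1 = 1"
  using ds_rec[OF assms, of 1] assms by (simp add: ds_0)

lemma ds_sub:
  assumes p: "p \<ge> 2"
  shows "digit_sum p (a + b) \<le> digit_sum p a + digit_sum p b"
proof -
  have "\<forall>a b. a + b = n \<longrightarrow> digit_sum p (a + b) \<le> digit_sum p a + digit_sum p b" for n
  proof (induction n rule: less_induct)
    case (less n)
    show ?case
    proof (intro allI impI)
      fix a b assume ab: "a + b = n"
      show "digit_sum p (a + b) \<le> digit_sum p a + digit_sum p b"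
      proof (cases "n = 0")
        case True thus ?thesis using ab by (simp add: ds_0)
      next
        case False
        define a0 a1 b0 b1 where "a0 = a mod p" "a1 = a div p" "b0 = b mod p" "b1 = b div p"
        have ea: "a = p * a1 + a0" and eb: "b = p * b1 + b0"
          by (simp_all add: a0_a1_b0_b1_def)
        have a0: "a0 < p" "b0 < p" using p by (simp_all add: a0_a1_b0_b1_def)
        have sa: "digit_sum p a = a0 + digit_sum p a1" and sb: "digit_sum p b = b0 + digit_sum p b1"
          using ds_rec[OF p, of a] ds_rec[OF p, of b] by (simp_all add: a0_a1_b0_b1_def)
        have lt: "a1 + b1 < n"
        proof -
          have "p * (a1 + b1) \<ge> 2 * (a1 + b1)" using p by (intro mult_le_mono1)
          thus ?thesis using ea eb ab False by (simp add: algebra_simps)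
        qed
        show ?thesis
        proof (cases "a0 + b0 < p")
          case True
          have e: "a + b = p * (a1 + b1) + (a0 + b0)" using ea eb by (simp add: algebra_simps)
          have "digit_sum p (a + b) = (a0 + b0) + digit_sum p (a1 + b1)"
            using ds_rec[OF p, of "a+b"] True p unfolding e by simp
          thus ?thesis using less.IH[OF lt] sa sb by force
        next
          case False
          have e: "a + b = p * (a1 + b1 + 1) + (a0 + b0 - p)" using ea eb False by (simp add: algebra_simps)
          have e0: "a0 + b0 - p < p" using a0 by simp
          have m1: "(p * (a1 + b1 + 1) + (a0 + b0 - p)) mod p = a0 + b0 - p"
            using e0 by (metis mod_mult_self3 mod_less mult.commute)
          have d1: "(p * (a1 + b1 + 1) + (a0 + b0 - p)) div p = a1 + b1 + 1"
            using e0 p by (metis div_mult_self1 div_less add.commute add_0_right mult.commute not_numeral_le_zero)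
          have "digit_sum p (a + b) = (a0 + b0 - p) + digit_sum p (a1 + b1 + 1)"
            using ds_rec[OF p, of "a+b"] unfolding e m1 d1 .
          moreover have lt2: "a1 + b1 + 1 < n"
          proof -
            have "p * (a1 + b1 + 1) \<ge> 2 * (a1 + b1 + 1)" using p by (intro mult_le_mono1)
            moreover have "p * (a1 + b1 + 1) \<le> a + b" unfolding e by (rule le_add1)
            ultimately have "2 * (a1 + b1 + 1) \<le> n" using ab by (metis le_trans)
            thus ?thesis by presburger
          qed
          have "digit_sum p (a1 + b1 + 1) \<le> digit_sum p (a1 + b1) + 1"
            using less.IH[OF lt2] ds_1[OF p] by (metis order.refl)
          moreover have "digit_sum p (a1 + b1) \<le> digit_sum p a1 + digit_sum p b1"
            using less.IH[OF lt] by auto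
          ultimately show ?thesis using sa sb False p by linarith
        qed
      qed
    qed
  qed
  thus ?thesis by blast
qed

lemma ds_split:
  assumes p: "p \<ge> 2"
  shows "b < p ^ r \<Longrightarrow> digit_sum p (a * p ^ r + b) = digit_sum p a + digit_sum p b"
proof (induction r arbitrary: b)
  case 0 thus ?case by (simp add: ds_0)
next
  case (Suc r)
  have bd: "b div p < p ^ r" using Suc.prems p
    by (simp add: div_less_iff_less_mult mult.commute)
  have e: "a * p ^ Suc r + b = p * (a * p ^ r + b div p) + b mod p"
    by (simp add: algebra_simps)
  have "digit_sum p (a * p ^ Suc r + b) = b mod p + digit_sum p (a * p ^ r + b div p)"
    using ds_rec[OF p, of "a * p ^ Suc r + b"] p unfolding e by simp
  also have "\<dots> = b mod p + digit_sum p a + digit_sum p (b div p)"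
    using Suc.IH[OF bd] by simp
  also have "\<dots> = digit_sum p a + digit_sum p b" using ds_rec[OF p, of b] by simp
  finally show ?case .
qed

lemma fold_exists:
  assumes p: "p \<ge> 2" and r: "r \<ge> 1"
  shows "\<exists>v. v \<le> p ^ r - 1 \<and> v mod (p ^ r - 1) = u mod (p ^ r - 1) \<and> (v = 0 \<longleftrightarrow> u = 0)
           \<and> digit_sum p v \<le> digit_sum p u"
proof (induction u rule: less_induct)
  case (less u)
  define N where "N = p ^ r - 1"
  have "p ^ 1 \<le> p ^ r" using p r by (intro power_increasing) auto
  hence pr: "p ^ r \<ge> 2" using p by simp
  show ?case
  proof (cases "u \<le> p ^ r - 1")
    case True thus ?thesis by blast
  next
    case False
    define a b where "a = u div p ^ r" "b = u mod p ^ r"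
    have eu: "u = a * p ^ r + b" unfolding a_b_def by (rule div_mult_mod_eq[symmetric])
    have a1: "a \<ge> 1" using False pr p unfolding a_b_def
      by (simp add: div_greater_zero_iff Suc_le_eq)
    have bl: "b < p ^ r" using pr unfolding a_b_def by (intro mod_less_divisor) linarith
    have lt: "a + b < u"
    proof -
      have "a * p ^ r \<ge> a * 2" using pr by (intro mult_le_mono2)
      thus ?thesis using eu a1 by linarith
    qed
    obtain v where v: "v \<le> N" "v mod N = (a + b) mod N" "(v = 0 \<longleftrightarrow> a + b = 0)"
      "digit_sum p v \<le> digit_sum p (a + b)"
      using less.IH[OF lt] unfolding N_def by blast
    have "p ^ r = N + 1" using pr unfolding N_def by simp
    hence "u = a * N + (a + b)" using eu by (simp add: algebra_simps)
    hence m: "u mod N = (a + b) mod N" by (metis mod_mult_self3 add.commute mult.commute)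
    have "digit_sum p (a + b) \<le> digit_sum p u"
      using ds_sub[OF p, of a b] ds_split[OF p bl, of a] eu by simp
    thus ?thesis using v m a1 False unfolding N_def by auto
  qed
qed

theorem lemma2p4:
  fixes D :: "(nat ^ 'n) set" and p r :: nat and u :: "nat ^ 'n \<Rightarrow> nat"
  assumes "finite D"
    and "\<forall>i. \<exists>d\<in>D. d $ i \<noteq> 0"
    and "prime p" and "r \<ge> 1"
    and "\<forall>i. (p ^ r - 1) dvd (\<Sum>d\<in>D. u d * d $ i)"
    and "\<forall>i. 0 < (\<Sum>d\<in>D. u d * d $ i)"
  shows "(\<Sum>d\<in>D. digit_sum p (u d)) \<ge> s_D D p r"
proof -
  define N where "N = p ^ r - 1"
  have p: "p \<ge> 2" using assms(3) prime_ge_2_nat by blast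
  have "\<forall>x. \<exists>v. v \<le> N \<and> v mod N = u x mod N \<and> (v = 0 \<longleftrightarrow> u x = 0) \<and> digit_sum p v \<le> digit_sum p (u x)"
    using fold_exists[OF p assms(4)] unfolding N_def by blast
  hence "\<exists>f. \<forall>x. f x \<le> N \<and> f x mod N = u x mod N \<and> (f x = 0 \<longleftrightarrow> u x = 0) \<and> digit_sum p (f x) \<le> digit_sum p (u x)"
    by (rule choice)
  then obtain f where fa: "\<forall>x. f x \<le> N \<and> f x mod N = u x mod N \<and> (f x = 0 \<longleftrightarrow> u x = 0) \<and> digit_sum p (f x) \<le> digit_sum p (u x)"
    by blast
  have f: "\<And>x. f x \<le> N" "\<And>x. f x mod N = u x mod N" "\<And>x. f x = 0 \<longleftrightarrow> u x = 0"
    "\<And>x. digit_sum p (f x) \<le> digit_sum p (u x)" using fa by blast+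
  define U where "U d = (if d \<in> D then f d else 0)" for d
  have UE: "U \<in> E_set D p r"
    unfolding E_set_def mem_Collect_eq N_def[symmetric]
  proof (intro conjI allI ballI impI)
    fix d assume "d \<notin> D" thus "U d = 0" by (simp add: U_def)
  next
    fix d assume "d \<in> D" thus "U d \<le> N" using f(1) by (simp add: U_def)
  next
    fix i
    have "(\<Sum>d\<in>D. U d * d $ i) mod N = (\<Sum>d\<in>D. U d * d $ i mod N) mod N"
      by (simp add: mod_sum_eq)
    also have "(\<Sum>d\<in>D. U d * d $ i mod N) = (\<Sum>d\<in>D. u d * d $ i mod N)"
      by (rule sum.cong) (auto simp: U_def intro: mod_mult_cong f(2))
    also have "(\<Sum>d\<in>D. u d * d $ i mod N) mod N = (\<Sum>d\<in>D. u d * d $ i) mod N"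
      by (simp add: mod_sum_eq)
    finally show "N dvd (\<Sum>d\<in>D. U d * d $ i)"
      using assms(5) unfolding N_def[symmetric] by (simp add: dvd_eq_mod_eq_0)
  next
    fix i
    have "\<exists>d\<in>D. u d * d $ i \<noteq> 0"
    proof (rule ccontr)
      assume "\<not> ?thesis"
      hence "(\<Sum>d\<in>D. u d * d $ i) = 0" by (intro sum.neutral) auto
      thus False using assms(6) by (metis less_irrefl)
    qed
    then obtain d where "d \<in> D" "u d * d $ i \<noteq> 0" by blast
    hence pos: "0 < U d * d $ i" using f(3)[of d] by (simp add: U_def)
    have "U d * d $ i \<le> (\<Sum>d\<in>D. U d * d $ i)"
      by (rule member_le_sum) (use \<open>d \<in> D\<close> assms(1) in auto)
    thus "0 < (\<Sum>d\<in>D. U d * d $ i)" using pos by linarith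
  qed
  have fin: "finite (E_set D p r)"
  proof (rule finite_subset)
    show "E_set D p r \<subseteq> {g. \<forall>x. (x \<in> D \<longrightarrow> g x \<in> {..N}) \<and> (x \<notin> D \<longrightarrow> g x = 0)}"
      unfolding E_set_def N_def by auto
    show "finite {g. \<forall>x. (x \<in> D \<longrightarrow> g x \<in> {..N}) \<and> (x \<notin> D \<longrightarrow> g x = (0::nat))}"
      by (rule finite_set_of_finite_funs) (use assms(1) in auto)
  qed
  have "s_D D p r \<le> (\<Sum>d\<in>D. digit_sum p (U d))"
    unfolding s_D_def using fin UE by (intro Min_le) auto
  also have "\<dots> \<le> (\<Sum>d\<in>D. digit_sum p (u d))"
    by (rule sum_mono) (simp add: U_def f(4))
  finally show ?thesis .
qed

end
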